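(* Let $*$ be a rank-one preserving product on $M_{n\times m}(\mathbb{C})$. Then $*$ is a generalized Schur product: there exist a unital associative complex algebra $\mathcal{A}$ of dimension $n$, a unital associative complex algebra $\mathcal{B}$ of dimension $m$, and linear bijections $v_{\mathcal{A}}:\mathcal{A}\to\mathbb{C}^n$, $v_{\mathcal{B}}:\mathcal{B}\to\mathbb{C}^m$ such that for all $a,c\in\mathcal{A}$ and $b,d\in\mathcal{B}$, $$ v_{\mathcal{A}}(a)v_{\mathcal{B}}(b)^* * v_{\mathcal{A}}(c)v_{\mathcal{B}}(d)^* = v_{\mathcal{A}}(ac)\,v_{\mathcal{B}}(bd)^*. $$ (In fact one may take $\mathcal{A}=\mathbb{C}^n$, $\mathcal{B}=\mathbb{C}^m$ with suitable products and $v_{\mathcal{A}},v_{\mathcal{B}}$ the identity maps.)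
   Context: A rank-one preserving product (ropp) on $M_{n\times m}(\mathbb{C})$ is an associative bilinear product $*$ on $M_{n\times m}(\mathbb{C})$ which has an identity element of rank one and such that the $*$-product of any two rank-one matrices has rank at most one. Given unital algebras $\mathcal{A}$ (dimension $n$), $\mathcal{B}$ (dimension $m$) and linear bijections $v_{\mathcal{A}}:\mathcal{A}\to\mathbb{C}^n$, $v_{\mathcal{B}}:\mathcal{B}\to\mathbb{C}^m$, the generalized Schur product is the unique bilinear product on $M_{n\times m}(\mathbb{C})$ satisfying $v_{\mathcal{A}}(a)v_{\mathcal{B}}(b)^* * v_{\mathcal{A}}(c)v_{\mathcal{B}}(d)^* = v_{\mathcal{A}}(ac)v_{\mathcal{B}}(bd)^*$; here $u^*$ is the conjugate transpose of a column vector $u$. *)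

theory Defs
  imports "HOL-Analysis.Analysis"
begin

text \<open>Matrices in M_{n x m}(C) are rendered as complex^'m^'n (n = CARD('n) rows,
m = CARD('m) columns). Scalar multiplication of a matrix:\<close>

definition mscale :: "complex \<Rightarrow> complex^'m^'n \<Rightarrow> complex^'m^'n" where
  "mscale c A = (\<chi> i j. c * A$i$j)"

definition mat_bilinear :: "(complex^'m^'n \<Rightarrow> complex^'m^'n \<Rightarrow> complex^'m^'n) \<Rightarrow> bool" where
  "mat_bilinear p \<longleftrightarrow>
     (\<forall>A B C. p (A + B) C = p A C + p B C) \<and>
     (\<forall>A B C. p A (B + C) = p A B + p A C) \<and>
     (\<forall>c A B. p (mscale c A) B = mscale c (p A B)) \<and>
     (\<forall>c A B. p A (mscale c B) = mscale c (p A B))"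

definition ropp :: "(complex^'m^'n \<Rightarrow> complex^'m^'n \<Rightarrow> complex^'m^'n) \<Rightarrow> bool" where
  "ropp p \<longleftrightarrow> mat_bilinear p \<and>
     (\<forall>A B C. p (p A B) C = p A (p B C)) \<and>
     (\<exists>E. rank E = 1 \<and> (\<forall>A. p E A = A \<and> p A E = A)) \<and>
     (\<forall>A B. rank A = 1 \<longrightarrow> rank B = 1 \<longrightarrow> rank (p A B) \<le> 1)"

definition unital_algebra :: "(complex^'k \<Rightarrow> complex^'k \<Rightarrow> complex^'k) \<Rightarrow> bool" where
  "unital_algebra q \<longleftrightarrow>
     (\<forall>x y z. q (x + y) z = q x z + q y z) \<and>
     (\<forall>x y z. q x (y + z) = q x y + q x z) \<and>
     (\<forall>(c::complex) x y. q (c *s x) y = c *s q x y) \<and>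
     (\<forall>(c::complex) x y. q x (c *s y) = c *s q x y) \<and>
     (\<forall>x y z. q (q x y) z = q x (q y z)) \<and>
     (\<exists>e. \<forall>x. q e x = x \<and> q x e = x)"

text \<open>The matrix u v^* (v^* the conjugate transpose of the column vector v).\<close>
definition outer :: "complex^'n \<Rightarrow> complex^'m \<Rightarrow> complex^'m^'n" where
  "outer u v = (\<chi> i j. u$i * cnj (v$j))"

end

theory Submission
  imports Defs
begin


lemma row_in_rows: "row i X \<in> rows X"
  unfolding rows_def by blast

lemma rank_le1_outer:
  fixes X :: "complex^'m^'n"
  assumes "rank X \<le> 1"
  shows "\<exists>u w. X = outer u w"
proof -
  obtain B where B: "B \<subseteq> rows X" "vec.independent B" "rows X \<subseteq> vec.span B" "card B = vec.dim (rows X)"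
    using vec.basis_exists by blast
  have fin: "finite B" using B(2) vec.finiteI_independent by blast
  have cB: "card B \<le> 1" using B(4) assms unfolding row_rank_def_gen by simp
  have inspan: "row i X \<in> vec.span B" for i using B(3) row_in_rows by blast
  show ?thesis
  proof (cases "B = {}")
    case True
    have "X$i$j = 0" for i j
    proof -
      have "row i X = 0" using inspan[of i] True by simp
      then have "(row i X)$j = 0" by simp
      then show ?thesis by (simp add: row_def)
    qed
    then have "X = outer 0 0" unfolding outer_def by (simp add: vec_eq_iff)
    then show ?thesis by blast
  next
    case False
    have "card B \<noteq> 0" using False fin by simp
    then have "card B = 1" using cB by linarith
    then obtain r where r: "B = {r}" by (rule card_1_singletonE)
    have "\<exists>k. row i X = k *s r" for i using inspan[of i] unfolding r vec.span_singleton by blast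
    then obtain c where c: "\<And>i. row i X = c i *s r" by metis
    have "X$i$j = c i * r$j" for i j
    proof -
      have "(row i X)$j = (c i *s r)$j" using c by simp
      then show ?thesis by (simp add: row_def)
    qed
    then have "X = outer (\<chi> i. c i) (\<chi> j. cnj (r$j))" unfolding outer_def by (simp add: vec_eq_iff)
    then show ?thesis by blast
  qed
qed

lemma rank_outer:
  fixes u :: "complex^'n" and w :: "complex^'m"
  assumes "u \<noteq> 0" "w \<noteq> 0"
  shows "rank (outer u w) = 1"
proof -
  let ?r = "\<chi> j. cnj (w$j)"
  have "row i (outer u w) = u$i *s ?r" for i
    unfolding outer_def row_def by (simp add: vec_eq_iff)
  then have "rows (outer u w) \<subseteq> vec.span {?r}"
    unfolding rows_def vec.span_singleton by auto
  then have le: "vec.dim (rows (outer u w)) \<le> 1"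
    using vec.dim_le_card[of "rows (outer u w)" "{?r}"] by simp
  obtain i where i: "u$i \<noteq> 0" using assms(1) by (auto simp: vec_eq_iff)
  obtain j where j: "w$j \<noteq> 0" using assms(2) by (auto simp: vec_eq_iff)
  have "row i (outer u w) \<noteq> 0"
  proof
    assume "row i (outer u w) = 0"
    then have "(row i (outer u w))$j = 0" by simp
    then show False using i j by (simp add: row_def outer_def)
  qed
  then have "\<not> rows (outer u w) \<subseteq> {0}" using row_in_rows by blast
  then have "vec.dim (rows (outer u w)) \<noteq> 0" using vec.dim_eq_0 by blast
  then show ?thesis using le unfolding row_rank_def_gen by linarith
qed



lemma outer_add_left: "outer (a + a') b = outer a b + outer a' b"
  unfolding outer_def by (simp add: vec_eq_iff algebra_simps)
lemma outer_add_right: "outer a (b + b') = outer a b + outer a b'"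
  unfolding outer_def by (simp add: vec_eq_iff algebra_simps)
lemma outer_scale_left: "outer (c *s a) b = mscale c (outer a b)"
  unfolding outer_def mscale_def by (simp add: vec_eq_iff algebra_simps)
lemma outer_scale_right: "outer a (c *s b) = mscale (cnj c) (outer a b)"
  unfolding outer_def mscale_def by (simp add: vec_eq_iff algebra_simps)
lemma outer_zero_left[simp]: "outer 0 b = 0"
  unfolding outer_def by (simp add: vec_eq_iff)
lemma outer_zero_right[simp]: "outer a 0 = 0"
  unfolding outer_def by (simp add: vec_eq_iff)

lemma outer_eq_zero: "outer a b = 0 \<Longrightarrow> a = 0 \<or> b = 0"
proof (rule ccontr)
  assume h: "outer a b = 0" "\<not> (a = 0 \<or> b = 0)"
  then obtain i j where "a$i \<noteq> 0" "b$j \<noteq> 0" by (auto simp: vec_eq_iff)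
  moreover have "(outer a b)$i$j = 0" using h by simp
  ultimately show False unfolding outer_def by simp
qed

lemma outer_inj_left:
  assumes "outer x f = outer x' f" "(f::complex^'m) \<noteq> 0"
  shows "(x::complex^'n) = x'"
proof -
  obtain j where j: "f$j \<noteq> 0" using assms(2) by (auto simp: vec_eq_iff)
  have "x$i = x'$i" for i
  proof -
    have "(outer x f)$i$j = (outer x' f)$i$j" using assms(1) by simp
    then show ?thesis using j unfolding outer_def by simp
  qed
  then show ?thesis by (simp add: vec_eq_iff)
qed

lemma outer_inj_right:
  assumes "outer e y = outer e y'" "(e::complex^'n) \<noteq> 0"
  shows "(y::complex^'m) = y'"
proof -
  obtain i where i: "e$i \<noteq> 0" using assms(2) by (auto simp: vec_eq_iff)
  have "y$j = y'$j" for j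
  proof -
    have "(outer e y)$i$j = (outer e y')$i$j" using assms(1) by simp
    then show ?thesis using i unfolding outer_def by simp
  qed
  then show ?thesis by (simp add: vec_eq_iff)
qed

definition dep :: "complex^'k \<Rightarrow> complex^'k \<Rightarrow> bool" where
  "dep x y \<longleftrightarrow> (\<forall>i k. x$i * y$k = x$k * y$i)"

lemma dep_sym: assumes "dep x y" shows "dep y x"
proof -
  have "y$i * x$k = y$k * x$i" for i k
    using assms unfolding dep_def by (simp add: mult.commute)
  then show ?thesis unfolding dep_def by blast
qed

lemma dep_scale:
  assumes "dep x y" "y \<noteq> 0"
  shows "\<exists>c. x = c *s y"
proof -
  obtain k where k: "y$k \<noteq> 0" using assms(2) by (auto simp: vec_eq_iff)
  define c where "c = x$k / y$k"
  have xi: "x$i = c * y$i" for i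
  proof -
    have h: "x$i * y$k = x$k * y$i" using assms(1) unfolding dep_def by blast
    have "x$i = (x$i * y$k) / y$k" using k by (rule nonzero_mult_div_cancel_right[symmetric])
    also have "\<dots> = (x$k * y$i) / y$k" unfolding h ..
    also have "\<dots> = (x$k / y$k) * y$i" by (rule times_divide_eq_left[symmetric])
    finally show ?thesis unfolding c_def .
  qed
  have "x = c *s y" unfolding vec_eq_iff vector_smult_component using xi by blast
  then show ?thesis by blast
qed

lemma rank1_sum:
  assumes "outer u1 w1 + outer u2 w2 = outer u w"
  shows "dep u1 u2 \<or> dep w1 w2"
proof (rule ccontr)
  assume "\<not> (dep u1 u2 \<or> dep w1 w2)"
  then obtain i k j l where ik: "u1$i * u2$k \<noteq> u1$k * u2$i" and jl: "w1$j * w2$l \<noteq> w1$l * w2$j"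
    unfolding dep_def by blast
  let ?X = "outer u w"
  have X: "\<And>a b. ?X$a$b = u1$a * cnj (w1$b) + u2$a * cnj (w2$b)"
    using assms[symmetric] by (simp add: outer_def)
  have "?X$i$j * ?X$k$l - ?X$i$l * ?X$k$j = 0" by (simp add: outer_def)
  moreover have "?X$i$j * ?X$k$l - ?X$i$l * ?X$k$j
     = (u1$i * u2$k - u1$k * u2$i) * (cnj (w1$j) * cnj (w2$l) - cnj (w1$l) * cnj (w2$j))"
    unfolding X by algebra
  moreover have "cnj (w1$j) * cnj (w2$l) - cnj (w1$l) * cnj (w2$j) \<noteq> 0"
  proof
    assume "cnj (w1$j) * cnj (w2$l) - cnj (w1$l) * cnj (w2$j) = 0"
    then have "cnj (w1$j * w2$l - w1$l * w2$j) = 0" by (simp only: complex_cnj_diff complex_cnj_mult)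
    then have "w1$j * w2$l - w1$l * w2$j = 0" by (simp only: complex_cnj_zero_iff)
    then show False using jl by simp
  qed
  ultimately show False using ik by simp
qed



lemma not_dep_of_not_multiple:
  assumes "\<forall>l. a \<noteq> l *s e" "e \<noteq> 0"
  shows "\<not> dep a e"
  using dep_scale assms by blast

lemma not_dep_shift:
  assumes "\<forall>l. b \<noteq> l *s f" "f \<noteq> 0"
  shows "\<not> dep (b + x *s f) f"
proof
  assume "dep (b + x *s f) f"
  then obtain c where c: "b + x *s f = c *s f" using dep_scale assms(2) by blast
  have "b = (c - x) *s f"
  proof -
    have "b$i = (c - x) * f$i" for i
    proof -
      have "(b + x *s f)$i = (c *s f)$i" using c by simp
      then show ?thesis by (simp add: algebra_simps)
    qed
    then show ?thesis unfolding vec_eq_iff vector_smult_component by blast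
  qed
  then show False using assms(1) by blast
qed

lemma three_dep:
  assumes "dep a u" "dep c u" "dep (c + a + e) u" "u \<noteq> 0" "e \<noteq> 0"
  shows "\<exists>l. c = l *s e"
proof -
  obtain al where al: "a = al *s u" using dep_scale assms by blast
  obtain ga where ga: "c = ga *s u" using dep_scale assms by blast
  obtain de where de: "c + a + e = de *s u" using dep_scale assms by blast
  define d where "d = de - ga - al"
  have ei: "e$i = d * u$i" for i
  proof -
    have "(c + a + e)$i = (de *s u)$i" using de by simp
    then show ?thesis unfolding d_def using al ga by (simp add: algebra_simps)
  qed
  have "d \<noteq> 0"
  proof
    assume "d = 0"
    then have "e = 0" using ei by (simp add: vec_eq_iff)
    then show False using assms(5) by simp
  qed
  have "c$i = (ga / d) * e$i" for i
    unfolding ei using \<open>d \<noteq> 0\<close> ga by simp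
  then have "c = (ga / d) *s e" unfolding vec_eq_iff vector_smult_component by blast
  then show ?thesis by blast
qed

lemma core1:
  fixes a e :: "complex^'n" and b f :: "complex^'m" and G :: "complex^'m^'n"
  assumes e: "e \<noteq> 0" and f: "f \<noteq> 0" and na: "\<forall>l. a \<noteq> l *s e" and nb: "\<forall>l. b \<noteq> l *s f"
  and R1: "G = outer u w"
  and R2: "G + outer e b = outer u2 w2"
  and R3: "G + outer a f = outer u3 w3"
  and R4: "G + outer e b + outer a f + outer e f = outer u4 w4"
  shows "G = outer a b"
proof -
  have nae: "\<not> dep a e" using not_dep_of_not_multiple na e by blast
  have nea: "\<not> dep e a" using nae dep_sym by blast
  have nbf: "\<not> dep (b + x *s f) f" for x using not_dep_shift nb f by blast
  have nbf0: "\<not> dep b f" using nbf[of 0] by simp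
  have a0: "a \<noteq> 0" using na by (metis vector_smult_lzero)
  have b0: "b \<noteq> 0" using nb by (metis vector_smult_lzero)
  show ?thesis
  proof (cases "u = 0 \<or> w = 0")
    case True
    then have "G = 0" using R1 by auto
    then have "outer e (b + 1 *s f) + outer a f = outer u4 w4"
      using R4 by (simp add: outer_add_right algebra_simps)
    then have "dep e a \<or> dep (b + 1 *s f) f" by (rule rank1_sum)
    then show ?thesis using nea nbf by blast
  next
    case False
    then have u0: "u \<noteq> 0" and w0: "w \<noteq> 0" by auto
    have d2: "dep u e \<or> dep w b" using R2 unfolding R1 by (rule rank1_sum)
    have d3: "dep u a \<or> dep w f" using R3 unfolding R1 by (rule rank1_sum)
    {
      assume h: "dep u e" "dep u a"
      obtain be where "a = be *s u" using dep_scale[OF dep_sym[OF h(2)] u0] by blast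
      moreover obtain al where "u = al *s e" using dep_scale[OF h(1) e] by blast
      ultimately have "a = (be * al) *s e" by simp
      then have False using na by blast
    }
    moreover
    {
      assume h: "dep w b" "dep w f"
      obtain be where "b = be *s w" using dep_scale[OF dep_sym[OF h(1)] w0] by blast
      moreover obtain al where "w = al *s f" using dep_scale[OF h(2) f] by blast
      ultimately have "b = (be * al) *s f" by simp
      then have False using nb by blast
    }
    moreover
    {
      assume h: "dep u e" "dep w f"
      obtain al where al: "u = al *s e" using dep_scale[OF h(1) e] by blast
      obtain be where be: "w = be *s f" using dep_scale[OF h(2) f] by blast
      have "G + outer e b + outer a f + outer e f = outer e (b + (cnj al * be + 1) *s f) + outer a f"
        unfolding R1 al be by (simp add: outer_def vec_eq_iff algebra_simps)
      then have "outer e (b + (cnj al * be + 1) *s f) + outer a f = outer u4 w4" using R4 by simp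
      then have "dep e a \<or> dep (b + (cnj al * be + 1) *s f) f" by (rule rank1_sum)
      then have False using nea nbf by blast
    }
    moreover
    {
      assume h: "dep w b" "dep u a"
      obtain al where al: "u = al *s a" using dep_scale[OF h(2) a0] by blast
      obtain be where be: "w = be *s b" using dep_scale[OF h(1) b0] by blast
      define g where "g = cnj al * be"
      have Gg: "G = outer a (g *s b)"
        unfolding R1 al be g_def by (simp add: outer_def vec_eq_iff algebra_simps)
      have "G + outer e b + outer a f + outer e f = outer a (g *s b + f) + outer e (b + f)"
        unfolding Gg by (simp add: outer_def vec_eq_iff algebra_simps)
      then have "outer a (g *s b + f) + outer e (b + f) = outer u4 w4" using R4 by simp
      then have "dep a e \<or> dep (g *s b + f) (b + f)" by (rule rank1_sum)
      then have dd: "dep (g *s b + f) (b + f)" using nae by blast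
      have bf0: "b + f \<noteq> 0"
      proof
        assume "b + f = 0"
        then have "b = (-1) *s f" by (simp add: vec_eq_iff add_eq_0_iff)
        then show False using nb by blast
      qed
      obtain l where l: "g *s b + f = l *s (b + f)" using dep_scale[OF dd bf0] by blast
      have comp: "(g - l) * b$i = (l - 1) * f$i" for i
      proof -
        have "(g *s b + f)$i = (l *s (b + f))$i" using l by simp
        then show ?thesis by (simp add: algebra_simps)
      qed
      have "g = l"
      proof (rule ccontr)
        assume ne: "g \<noteq> l"
        have "b$i = ((l - 1) / (g - l)) * f$i" for i
        proof -
          have "g - l \<noteq> 0" using ne by simp
          then show ?thesis using comp[of i] by (simp add: field_simps)
        qed
        then have "b = ((l - 1) / (g - l)) *s f" unfolding vec_eq_iff vector_smult_component by blast
        then show False using nb by blast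
      qed
      obtain j where j: "f$j \<noteq> 0" using f by (auto simp: vec_eq_iff)
      have "(l - 1) * f$j = 0" using comp[of j] \<open>g = l\<close> by simp
      then have "l = 1" using j by simp
      then have "g = 1" using \<open>g = l\<close> by simp
      then have "G = outer a b" using Gg by simp
    }
    ultimately show ?thesis using d2 d3 by blast
  qed
qed



lemma core3:
  fixes a c e :: "complex^'n" and f :: "complex^'m" and H :: "complex^'m^'n"
  assumes e: "e \<noteq> 0" and f: "f \<noteq> 0" and nc: "\<forall>l. c \<noteq> l *s e"
  and R1: "H = outer u w"
  and R2: "H + outer a f = outer u2 w2"
  and R3: "H + outer c f = outer u3 w3"
  and R4: "H + outer c f + outer a f + outer e f = outer u4 w4"
  shows "\<exists>x. H = outer x f"
proof (cases "u = 0")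
  case True
  then have "H = outer 0 f" using R1 by simp
  then show ?thesis by blast
next
  case False
  show ?thesis
  proof (cases "dep w f")
    case True
    then obtain be where be: "w = be *s f" using dep_scale f by blast
    have "H = outer (cnj be *s u) f" unfolding R1 be by (simp add: outer_def vec_eq_iff algebra_simps)
    then show ?thesis by blast
  next
    case nwf: False
    have "dep u a \<or> dep w f" using R2 unfolding R1 by (rule rank1_sum)
    then have da: "dep a u" using nwf dep_sym by blast
    have "dep u c \<or> dep w f" using R3 unfolding R1 by (rule rank1_sum)
    then have dc: "dep c u" using nwf dep_sym by blast
    have "H + outer c f + outer a f + outer e f = outer u w + outer (c + a + e) f"
      unfolding R1 by (simp add: outer_def vec_eq_iff algebra_simps)
    then have "outer u w + outer (c + a + e) f = outer u4 w4" using R4 by simp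
    then have "dep u (c + a + e) \<or> dep w f" by (rule rank1_sum)
    then have dcae: "dep (c + a + e) u" using nwf dep_sym by blast
    have "\<exists>l. c = l *s e" using three_dep[OF da dc dcae False e] .
    then show ?thesis using nc by blast
  qed
qed

lemma core4:
  fixes b d f :: "complex^'m" and e :: "complex^'n" and H :: "complex^'m^'n"
  assumes e: "e \<noteq> 0" and f: "f \<noteq> 0" and nd: "\<forall>l. d \<noteq> l *s f"
  and R1: "H = outer u w"
  and R2: "H + outer e b = outer u2 w2"
  and R3: "H + outer e d = outer u3 w3"
  and R4: "H + outer e d + outer e b + outer e f = outer u4 w4"
  shows "\<exists>y. H = outer e y"
proof (cases "w = 0")
  case True
  then have "H = outer e 0" using R1 by simp
  then show ?thesis by blast
next
  case False
  show ?thesis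
  proof (cases "dep u e")
    case True
    then obtain al where al: "u = al *s e" using dep_scale e by blast
    have "H = outer e (cnj al *s w)" unfolding R1 al by (simp add: outer_def vec_eq_iff algebra_simps)
    then show ?thesis by blast
  next
    case nue: False
    have "dep u e \<or> dep w b" using R2 unfolding R1 by (rule rank1_sum)
    then have db: "dep b w" using nue dep_sym by blast
    have "dep u e \<or> dep w d" using R3 unfolding R1 by (rule rank1_sum)
    then have dd: "dep d w" using nue dep_sym by blast
    have "H + outer e d + outer e b + outer e f = outer u w + outer e (d + b + f)"
      unfolding R1 by (simp add: outer_def vec_eq_iff algebra_simps)
    then have "outer u w + outer e (d + b + f) = outer u4 w4" using R4 by simp
    then have "dep u e \<or> dep w (d + b + f)" by (rule rank1_sum)
    then have ddbf: "dep (d + b + f) w" using nue dep_sym by blast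
    have "\<exists>l. d = l *s f" using three_dep[OF db dd ddbf False f] .
    then show ?thesis using nd by blast
  qed
qed



context
  fixes p :: "complex^'m^'n \<Rightarrow> complex^'m^'n \<Rightarrow> complex^'m^'n"
  assumes rp: "ropp p"
begin

lemma pL_add: "p (A + B) C = p A C + p B C" using rp unfolding ropp_def mat_bilinear_def by blast
lemma pR_add: "p A (B + C) = p A B + p A C" using rp unfolding ropp_def mat_bilinear_def by blast
lemma pL_sc: "p (mscale c A) B = mscale c (p A B)" using rp unfolding ropp_def mat_bilinear_def by blast
lemma pR_sc: "p A (mscale c B) = mscale c (p A B)" using rp unfolding ropp_def mat_bilinear_def by blast
lemma p_assoc: "p (p A B) C = p A (p B C)" using rp unfolding ropp_def by blast

lemma pL_zero: "p 0 B = 0"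
proof -
  have "p (0 + 0) B = p 0 B + p 0 B" by (rule pL_add)
  then show ?thesis by simp
qed
lemma pR_zero: "p A 0 = 0"
proof -
  have "p A (0 + 0) = p A 0 + p A 0" by (rule pR_add)
  then show ?thesis by simp
qed

lemma rk: "\<exists>u w. p (outer a b) (outer c d) = outer u w"
proof (cases "a = 0 \<or> b = 0 \<or> c = 0 \<or> d = 0")
  case True
  then have "p (outer a b) (outer c d) = outer 0 0" by (auto simp: pL_zero pR_zero)
  then show ?thesis by blast
next
  case False
  then have "rank (outer a b) = 1" "rank (outer c d) = 1" using rank_outer[of a b] rank_outer[of c d] by auto
  then have "rank (p (outer a b) (outer c d)) \<le> 1" using rp unfolding ropp_def by blast
  then show ?thesis by (rule rank_le1_outer)
qed

lemma unit_ex: "\<exists>e f. e \<noteq> 0 \<and> f \<noteq> 0 \<and> (\<forall>A. p (outer e f) A = A \<and> p A (outer e f) = A)"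
proof -
  obtain E where E: "rank E = 1" "\<forall>A. p E A = A \<and> p A E = A" using rp unfolding ropp_def by blast
  obtain e f where ef: "E = outer e f" using rank_le1_outer[of E] E(1) by auto
  have "e \<noteq> 0 \<and> f \<noteq> 0"
  proof (rule ccontr)
    assume "\<not> (e \<noteq> 0 \<and> f \<noteq> 0)"
    then have "E = 0" using ef by auto
    have all0: "A = 0" for A :: "complex^'m^'n"
    proof -
      have "A = p E A" using E(2) by simp
      also have "\<dots> = 0" using \<open>E = 0\<close> pL_zero by simp
      finally show ?thesis .
    qed
    let ?o = "(\<chi> i. 1) :: complex^'n" and ?o2 = "(\<chi> i. 1) :: complex^'m"
    have "?o \<noteq> 0" "?o2 \<noteq> 0" by (auto simp: vec_eq_iff)
    moreover have "outer ?o ?o2 = 0" by (rule all0)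
    ultimately show False using outer_eq_zero by blast
  qed
  then show ?thesis using E(2) ef by blast
qed

end



context
  fixes p :: "complex^'m^'n \<Rightarrow> complex^'m^'n \<Rightarrow> complex^'m^'n"
    and e :: "complex^'n" and f :: "complex^'m"
  assumes rp: "ropp p" and e0: "e \<noteq> 0" and f0: "f \<noteq> 0"
    and pE1: "\<And>A. p (outer e f) A = A" and pE2: "\<And>A. p A (outer e f) = A"
begin

lemmas pl = pL_add[OF rp] pR_add[OF rp] pL_sc[OF rp] pR_sc[OF rp] pE1 pE2

lemma fact1: "p (outer a f) (outer e b) = outer a b"
proof (cases "\<exists>l. a = l *s e")
  case True
  then obtain l where "a = l *s e" by blast
  then show ?thesis by (simp add: outer_scale_left pl)
next
  case na: False
  show ?thesis
  proof (cases "\<exists>l. b = l *s f")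
    case True
    then obtain l where "b = l *s f" by blast
    then show ?thesis by (simp add: outer_scale_right pl)
  next
    case nb: False
    let ?G = "p (outer a f) (outer e b)"
    obtain u w where R1: "?G = outer u w" using rk[OF rp] by blast
    obtain u2 w2 where R2': "p (outer (a + e) f) (outer e b) = outer u2 w2" using rk[OF rp] by blast
    obtain u3 w3 where R3': "p (outer a f) (outer e (b + f)) = outer u3 w3" using rk[OF rp] by blast
    obtain u4 w4 where R4': "p (outer (a + e) f) (outer e (b + f)) = outer u4 w4" using rk[OF rp] by blast
    have R2: "?G + outer e b = outer u2 w2" using R2' by (simp add: outer_add_left outer_add_right pl)
    have R3: "?G + outer a f = outer u3 w3" using R3' by (simp add: outer_add_left outer_add_right pl)
    have R4: "?G + outer e b + outer a f + outer e f = outer u4 w4"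
      using R4' by (simp add: outer_add_left outer_add_right pl algebra_simps)
    show ?thesis using core1[OF e0 f0 _ _ R1 R2 R3 R4] na nb by blast
  qed
qed

lemma fact2: "p (outer e b) (outer c f) = outer c b"
proof (cases "\<exists>l. c = l *s e")
  case True
  then obtain l where "c = l *s e" by blast
  then show ?thesis by (simp add: outer_scale_left pl)
next
  case na: False
  show ?thesis
  proof (cases "\<exists>l. b = l *s f")
    case True
    then obtain l where "b = l *s f" by blast
    then show ?thesis by (simp add: outer_scale_right pl)
  next
    case nb: False
    let ?G = "p (outer e b) (outer c f)"
    obtain u w where R1: "?G = outer u w" using rk[OF rp] by blast
    obtain u2 w2 where R2': "p (outer e b) (outer (c + e) f) = outer u2 w2" using rk[OF rp] by blast
    obtain u3 w3 where R3': "p (outer e (b + f)) (outer c f) = outer u3 w3" using rk[OF rp] by blast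
    obtain u4 w4 where R4': "p (outer e (b + f)) (outer (c + e) f) = outer u4 w4" using rk[OF rp] by blast
    have R2: "?G + outer e b = outer u2 w2" using R2' by (simp add: outer_add_left outer_add_right pl)
    have R3: "?G + outer c f = outer u3 w3" using R3' by (simp add: outer_add_left outer_add_right pl)
    have R4: "?G + outer e b + outer c f + outer e f = outer u4 w4"
      using R4' by (simp add: outer_add_left outer_add_right pl algebra_simps)
    show ?thesis using core1[OF e0 f0 _ _ R1 R2 R3 R4] na nb by blast
  qed
qed

lemma fact3: "\<exists>x. p (outer a f) (outer c f) = outer x f"
proof (cases "\<exists>l. c = l *s e")
  case True
  then obtain l where "c = l *s e" by blast
  then have "p (outer a f) (outer c f) = outer (l *s a) f" by (simp add: outer_scale_left pl)
  then show ?thesis by blast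
next
  case nc: False
  let ?G = "p (outer a f) (outer c f)"
  obtain u w where R1: "?G = outer u w" using rk[OF rp] by blast
  obtain u2 w2 where R2': "p (outer a f) (outer (c + e) f) = outer u2 w2" using rk[OF rp] by blast
  obtain u3 w3 where R3': "p (outer (a + e) f) (outer c f) = outer u3 w3" using rk[OF rp] by blast
  obtain u4 w4 where R4': "p (outer (a + e) f) (outer (c + e) f) = outer u4 w4" using rk[OF rp] by blast
  have R2: "?G + outer a f = outer u2 w2" using R2' by (simp add: outer_add_left pl)
  have R3: "?G + outer c f = outer u3 w3" using R3' by (simp add: outer_add_left pl)
  have R4: "?G + outer c f + outer a f + outer e f = outer u4 w4"
    using R4' by (simp add: outer_add_left pl algebra_simps)
  show ?thesis using core3[OF e0 f0 _ R1 R2 R3 R4] nc by blast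
qed

lemma fact4: "\<exists>y. p (outer e b) (outer e d) = outer e y"
proof (cases "\<exists>l. d = l *s f")
  case True
  then obtain l where "d = l *s f" by blast
  then have "p (outer e b) (outer e d) = outer e (l *s b)" by (simp add: outer_scale_right pl)
  then show ?thesis by blast
next
  case nd: False
  let ?G = "p (outer e b) (outer e d)"
  obtain u w where R1: "?G = outer u w" using rk[OF rp] by blast
  obtain u2 w2 where R2': "p (outer e b) (outer e (d + f)) = outer u2 w2" using rk[OF rp] by blast
  obtain u3 w3 where R3': "p (outer e (b + f)) (outer e d) = outer u3 w3" using rk[OF rp] by blast
  obtain u4 w4 where R4': "p (outer e (b + f)) (outer e (d + f)) = outer u4 w4" using rk[OF rp] by blast
  have R2: "?G + outer e b = outer u2 w2" using R2' by (simp add: outer_add_right pl)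
  have R3: "?G + outer e d = outer u3 w3" using R3' by (simp add: outer_add_right pl)
  have R4: "?G + outer e d + outer e b + outer e f = outer u4 w4"
    using R4' by (simp add: outer_add_right pl algebra_simps)
  show ?thesis using core4[OF e0 f0 _ R1 R2 R3 R4] nd by blast
qed

end



theorem mainTheorem3:
  fixes p :: "complex^'m^'n \<Rightarrow> complex^'m^'n \<Rightarrow> complex^'m^'n"
  assumes "ropp p"
  shows "\<exists>qa :: complex^'n \<Rightarrow> complex^'n \<Rightarrow> complex^'n.
         \<exists>qb :: complex^'m \<Rightarrow> complex^'m \<Rightarrow> complex^'m.
           unital_algebra qa \<and> unital_algebra qb \<and>
           (\<forall>a b c d. p (outer a b) (outer c d) = outer (qa a c) (qb b d))"
proof -
  note rp = assms
  obtain e f where e0: "e \<noteq> 0" and f0: "f \<noteq> 0" and pE: "\<And>A. p (outer e f) A = A" "\<And>A. p A (outer e f) = A"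
    using unit_ex[OF rp] by blast
  note pl = pL_add[OF rp] pR_add[OF rp] pL_sc[OF rp] pR_sc[OF rp] pE p_assoc[OF rp]
  note f1 = fact1[OF rp e0 f0 pE] and f2 = fact2[OF rp e0 f0 pE]
  define qa where "qa a c = (SOME x. p (outer a f) (outer c f) = outer x f)" for a c
  define qb where "qb b d = (SOME y. p (outer e b) (outer e d) = outer e y)" for b d
  have qa_eq: "p (outer a f) (outer c f) = outer (qa a c) f" for a c
    unfolding qa_def using someI_ex[OF fact3[OF rp e0 f0 pE, of a c]] by simp
  have qb_eq: "p (outer e b) (outer e d) = outer e (qb b d)" for b d
    unfolding qb_def using someI_ex[OF fact4[OF rp e0 f0 pE, of b d]] by simp
  note qa' = qa_eq[symmetric] and qb' = qb_eq[symmetric]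
  have "unital_algebra qa"
    unfolding unital_algebra_def
  proof (intro conjI allI)
    fix x y z :: "complex^'n" and c :: complex
    show "qa (x + y) z = qa x z + qa y z"
      by (rule outer_inj_left[OF _ f0]) (simp add: qa' outer_add_left pl)
    show "qa x (y + z) = qa x y + qa x z"
      by (rule outer_inj_left[OF _ f0]) (simp add: qa' outer_add_left pl)
    show "qa (c *s x) y = c *s qa x y"
      by (rule outer_inj_left[OF _ f0]) (simp add: qa' outer_scale_left pl)
    show "qa x (c *s y) = c *s qa x y"
      by (rule outer_inj_left[OF _ f0]) (simp add: qa' outer_scale_left pl)
    show "qa (qa x y) z = qa x (qa y z)"
      by (rule outer_inj_left[OF _ f0]) (simp add: qa' pl)
  next
    have "qa e x = x \<and> qa x e = x" for x
      using outer_inj_left[OF _ f0, of "qa e x" x] outer_inj_left[OF _ f0, of "qa x e" x]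
      by (simp add: qa' pl)
    then show "\<exists>e. \<forall>x. qa e x = x \<and> qa x e = x" by blast
  qed
  moreover have "unital_algebra qb"
    unfolding unital_algebra_def
  proof (intro conjI allI)
    fix x y z :: "complex^'m" and c :: complex
    show "qb (x + y) z = qb x z + qb y z"
      by (rule outer_inj_right[OF _ e0]) (simp add: qb' outer_add_right pl)
    show "qb x (y + z) = qb x y + qb x z"
      by (rule outer_inj_right[OF _ e0]) (simp add: qb' outer_add_right pl)
    show "qb (c *s x) y = c *s qb x y"
      by (rule outer_inj_right[OF _ e0]) (simp add: qb' outer_scale_right pl)
    show "qb x (c *s y) = c *s qb x y"
      by (rule outer_inj_right[OF _ e0]) (simp add: qb' outer_scale_right pl)
    show "qb (qb x y) z = qb x (qb y z)"
      by (rule outer_inj_right[OF _ e0]) (simp add: qb' pl)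
  next
    have "qb f x = x \<and> qb x f = x" for x
      using outer_inj_right[OF _ e0, of "qb f x" x] outer_inj_right[OF _ e0, of "qb x f" x]
      by (simp add: qb' pl)
    then show "\<exists>e. \<forall>x. qb e x = x \<and> qb x e = x" by blast
  qed
  moreover have "p (outer a b) (outer c d) = outer (qa a c) (qb b d)" for a b c d
  proof -
    have "p (outer a b) (outer c d) = p (p (outer a f) (outer e b)) (p (outer c f) (outer e d))"
      by (simp add: f1)
    also have "\<dots> = p (outer a f) (p (p (outer e b) (outer c f)) (outer e d))"
      by (simp add: p_assoc[OF rp])
    also have "\<dots> = p (outer a f) (p (p (outer c f) (outer e b)) (outer e d))"
      by (simp add: f1 f2)
    also have "\<dots> = p (p (outer a f) (outer c f)) (p (outer e b) (outer e d))"
      by (simp add: p_assoc[OF rp])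
    also have "\<dots> = p (outer (qa a c) f) (outer e (qb b d))"
      by (simp add: qa_eq qb_eq)
    also have "\<dots> = outer (qa a c) (qb b d)" by (rule f1)
    finally show ?thesis .
  qed
  ultimately show ?thesis by blast
qed

end
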